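(* Let $c\ge 1$. There exists a constant $A=A(c)\in(0,\infty)$ (depending only on $c$, in particular independent of $N$) such that the following holds for every $N$. Let $V_N=\{0,\ldots,N\}$ and let $\mathcal Q_N$ be the set of all birth and death Markov kernels $Q$ on $V_N$ with $Q(x,y)\in[1/4,3/4]$ whenever $|x-y|\le 1$, and whose reversible probability measure $\pi$ satisfies $1/4\le (N+1)\pi(x)\le 4$ for all $x\in V_N$. Let $(K_i)_{i\ge1}$ be a sequence with $K_i\in\mathcal Q_N$ for all $i$, and assume that $(K_i)_{i\ge1}$ is $c$-stable with respect to the uniform probability measure on $V_N$. Then for every $\varepsilon\in(0,1)$ the relative-sup merging time of $(K_i)_{i\ge1}$ satisfies \[T_\infty(\varepsilon)\le A N^2\bigl(1+\log_+ (1/\varepsilon)\bigr).\]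
   Context: A Markov kernel $K$ on a finite set $V$ satisfies $K(x,y)\ge0$ and $\sum_y K(x,y)=1$. For a sequence $(K_i)_{i\ge1}$ of Markov kernels, $K_{n,m}=K_{n+1}K_{n+2}\cdots K_m$ (matrix product) for $m\ge n$, with $K_{n,n}=I$. A birth and death kernel on $\{0,\ldots,N\}$ is one with $Q(x,y)=0$ whenever $|x-y|>1$. The sequence $(K_i)$ is $c$-stable with respect to a probability measure $\mu_0$ if, setting $\mu_n=\mu_0K_{0,n}$, one has $c^{-1}\le \mu_n(x)/\mu_0(x)\le c$ for all $n\ge0$ and $x\in V$. The relative-sup merging time is $T_\infty(\varepsilon)=\inf\{n: \max_{x,y,z\in V}|K_{0,n}(x,z)/K_{0,n}(y,z)-1|<\varepsilon\}$, with the conventions $0/0=1$ and $a/0=\infty$ for $a>0$. $\log_+ t=\max(\log t,0)$. *)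

theory Defs
  imports Complex_Main "HOL-Library.Extended_Nat"
begin

text \<open>Kernels on V_N = {0..N} are represented as functions nat => nat => real;
  only the values on {0..N} x {0..N} are relevant.\<close>

definition markov_kernel :: "nat \<Rightarrow> (nat \<Rightarrow> nat \<Rightarrow> real) \<Rightarrow> bool" where
  "markov_kernel N K \<longleftrightarrow>
     (\<forall>x\<in>{0..N}. \<forall>y\<in>{0..N}. K x y \<ge> 0) \<and> (\<forall>x\<in>{0..N}. (\<Sum>y\<in>{0..N}. K x y) = 1)"

definition birth_death :: "nat \<Rightarrow> (nat \<Rightarrow> nat \<Rightarrow> real) \<Rightarrow> bool" where
  "birth_death N Q \<longleftrightarrow> markov_kernel N Q \<and>
     (\<forall>x\<in>{0..N}. \<forall>y\<in>{0..N}. \<bar>int x - int y\<bar> > 1 \<longrightarrow> Q x y = 0)"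

definition prob_measure_on :: "nat \<Rightarrow> (nat \<Rightarrow> real) \<Rightarrow> bool" where
  "prob_measure_on N p \<longleftrightarrow> (\<forall>x\<in>{0..N}. p x \<ge> 0) \<and> (\<Sum>x\<in>{0..N}. p x) = 1"

definition reversible :: "nat \<Rightarrow> (nat \<Rightarrow> nat \<Rightarrow> real) \<Rightarrow> (nat \<Rightarrow> real) \<Rightarrow> bool" where
  "reversible N Q p \<longleftrightarrow> (\<forall>x\<in>{0..N}. \<forall>y\<in>{0..N}. p x * Q x y = p y * Q y x)"

text \<open>The class Q_N. Such a kernel is irreducible, so its reversible probability
  measure is unique; we require that it exists and satisfies the bounds.\<close>
definition QN :: "nat \<Rightarrow> (nat \<Rightarrow> nat \<Rightarrow> real) set" where
  "QN N = {Q. birth_death N Q \<and>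
     (\<forall>x\<in>{0..N}. \<forall>y\<in>{0..N}. \<bar>int x - int y\<bar> \<le> 1 \<longrightarrow> Q x y \<in> {1/4..3/4}) \<and>
     (\<exists>p. prob_measure_on N p \<and> reversible N Q p \<and>
          (\<forall>x\<in>{0..N}. 1/4 \<le> real (N+1) * p x \<and> real (N+1) * p x \<le> 4))}"

definition kmul :: "nat \<Rightarrow> (nat \<Rightarrow> nat \<Rightarrow> real) \<Rightarrow> (nat \<Rightarrow> nat \<Rightarrow> real) \<Rightarrow> (nat \<Rightarrow> nat \<Rightarrow> real)" where
  "kmul N P Q = (\<lambda>x y. \<Sum>z\<in>{0..N}. P x z * Q z y)"

text \<open>kprod N K n = K_{0,n} = K_1 K_2 ... K_n (K 0 is unused).\<close>
fun kprod :: "nat \<Rightarrow> (nat \<Rightarrow> nat \<Rightarrow> nat \<Rightarrow> real) \<Rightarrow> nat \<Rightarrow> (nat \<Rightarrow> nat \<Rightarrow> real)" where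
  "kprod N K 0 = (\<lambda>x y. if x = y then 1 else 0)"
| "kprod N K (Suc n) = kmul N (kprod N K n) (K (Suc n))"

definition uniform :: "nat \<Rightarrow> nat \<Rightarrow> real" where
  "uniform N x = 1 / real (N+1)"

definition c_stable :: "nat \<Rightarrow> real \<Rightarrow> (nat \<Rightarrow> nat \<Rightarrow> nat \<Rightarrow> real) \<Rightarrow> (nat \<Rightarrow> real) \<Rightarrow> bool" where
  "c_stable N c K mu0 \<longleftrightarrow> (\<forall>n. \<forall>x\<in>{0..N}.
     let mun = (\<Sum>y\<in>{0..N}. mu0 y * kprod N K n y x) in
       1/c \<le> mun / mu0 x \<and> mun / mu0 x \<le> c)"

text \<open>|a/b - 1| < eps with conventions 0/0 = 1 and a/0 = infinity for a > 0.\<close>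
definition ratio_close :: "real \<Rightarrow> real \<Rightarrow> real \<Rightarrow> bool" where
  "ratio_close a b eps \<longleftrightarrow> (if b = 0 then (if a = 0 then 0 < eps else False)
                            else \<bar>a / b - 1\<bar> < eps)"

definition merged :: "nat \<Rightarrow> (nat \<Rightarrow> nat \<Rightarrow> nat \<Rightarrow> real) \<Rightarrow> real \<Rightarrow> nat \<Rightarrow> bool" where
  "merged N K eps n \<longleftrightarrow> (\<forall>x\<in>{0..N}. \<forall>y\<in>{0..N}. \<forall>z\<in>{0..N}.
      ratio_close (kprod N K n x z) (kprod N K n y z) eps)"

text \<open>Relative-sup merging time, infinite if the set is empty.\<close>
definition T_inf :: "nat \<Rightarrow> (nat \<Rightarrow> nat \<Rightarrow> nat \<Rightarrow> real) \<Rightarrow> real \<Rightarrow> enat" where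
  "T_inf N K eps = Inf {enat n | n. merged N K eps n}"

definition log_plus :: "real \<Rightarrow> real" where
  "log_plus t = max (ln t) 0"

end

theory Submission
  imports Defs "HOL-Analysis.Convex"
begin


lemma var_identity:
  fixes p f :: "nat \<Rightarrow> real"
  assumes "finite I" "sum p I = 1"
  shows "(\<Sum>i\<in>I. \<Sum>j\<in>I. p i * p j * (f i - f j)^2) = 2 * (\<Sum>i\<in>I. p i * (f i)^2) - 2 * (\<Sum>i\<in>I. p i * f i)^2"
proof -
  have e: "\<And>i j. p i * p j * (f i - f j)^2 = p j * (p i * (f i)^2) + p i * (p j * (f j)^2) - 2 * ((p i * f i) * (p j * f j))"
    by (simp add: power2_eq_square algebra_simps)
  have "(\<Sum>i\<in>I. \<Sum>j\<in>I. p i * p j * (f i - f j)^2)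
     = (\<Sum>i\<in>I. \<Sum>j\<in>I. p j * (p i * (f i)^2)) + (\<Sum>i\<in>I. \<Sum>j\<in>I. p i * (p j * (f j)^2)) - 2 * (\<Sum>i\<in>I. \<Sum>j\<in>I. (p i * f i) * (p j * f j))"
    unfolding e by (simp add: sum_subtractf sum.distrib sum_distrib_left)
  also have "(\<Sum>i\<in>I. \<Sum>j\<in>I. p j * (p i * (f i)^2)) = (\<Sum>i\<in>I. p i * (f i)^2)"
    by (simp add: sum_distrib_right[symmetric] assms)
  also have "(\<Sum>i\<in>I. \<Sum>j\<in>I. p i * (p j * (f j)^2)) = (\<Sum>i\<in>I. p i * (f i)^2)"
    by (simp add: sum_distrib_left[symmetric] sum_distrib_right[symmetric] assms)
  also have "(\<Sum>i\<in>I. \<Sum>j\<in>I. (p i * f i) * (p j * f j)) = (\<Sum>i\<in>I. p i * f i)^2"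
    by (simp add: power2_eq_square sum_product)
  finally show ?thesis by simp
qed

lemma row_ineq:
  fixes p f :: "nat \<Rightarrow> real"
  assumes "finite I" "sum p I = 1" "\<And>i. i \<in> I \<Longrightarrow> p i \<ge> 0" "a \<in> I" "b \<in> I" "a \<noteq> b"
  shows "(\<Sum>i\<in>I. p i * f i)^2 + p a * p b * (f a - f b)^2 \<le> (\<Sum>i\<in>I. p i * (f i)^2)"
proof -
  define T where "T i j = p i * p j * (f i - f j)^2" for i j
  have T0: "i \<in> I \<Longrightarrow> j \<in> I \<Longrightarrow> T i j \<ge> 0" for i j using assms(3) unfolding T_def by simp
  have r0: "i \<in> I \<Longrightarrow> (\<Sum>j\<in>I. T i j) \<ge> 0" for i by (simp add: T0 sum_nonneg)
  have "T a b \<le> (\<Sum>j\<in>I. T a j)" by (rule member_le_sum) (use assms T0 in auto)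
  moreover have "T b a \<le> (\<Sum>j\<in>I. T b j)" by (rule member_le_sum) (use assms T0 in auto)
  moreover have "(\<Sum>i\<in>{a,b}. \<Sum>j\<in>I. T i j) \<le> (\<Sum>i\<in>I. \<Sum>j\<in>I. T i j)"
    by (rule sum_mono2) (use assms r0 in auto)
  moreover have "T b a = T a b" unfolding T_def by (simp add: power2_commute)
  ultimately have "2 * T a b \<le> (\<Sum>i\<in>I. \<Sum>j\<in>I. T i j)" using assms(6) by simp
  then show ?thesis using var_identity[OF assms(1,2), of f] unfolding T_def by simp
qed

lemma jensen:
  fixes p f :: "nat \<Rightarrow> real"
  assumes "finite I" "sum p I = 1" "\<And>i. i \<in> I \<Longrightarrow> p i \<ge> 0"
  shows "(\<Sum>i\<in>I. p i * f i)^2 \<le> (\<Sum>i\<in>I. p i * (f i)^2)"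
proof -
  have "0 \<le> (\<Sum>i\<in>I. \<Sum>j\<in>I. p i * p j * (f i - f j)^2)"
    by (intro sum_nonneg) (simp add: assms(3))
  then show ?thesis using var_identity[OF assms(1,2), of f] by simp
qed

definition Sd :: "nat \<Rightarrow> (nat \<Rightarrow> real) \<Rightarrow> real" where
  "Sd N f = (\<Sum>v<N. (f (Suc v) - f v)^2)"

lemma step_ineq:
  fixes \<rho> f :: "nat \<Rightarrow> real" and P :: "nat \<Rightarrow> nat \<Rightarrow> real"
  assumes rho0: "\<And>w. w \<in> {0..N} \<Longrightarrow> \<rho> w \<ge> 0"
    and P0: "\<And>w w'. w \<in> {0..N} \<Longrightarrow> w' \<in> {0..N} \<Longrightarrow> P w w' \<ge> 0"
    and P1: "\<And>w. w \<in> {0..N} \<Longrightarrow> (\<Sum>w'\<in>{0..N}. P w w') = 1"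
    and kap: "\<And>v. v < N \<Longrightarrow> \<kappa> \<le> \<rho> v * P v v * P v (Suc v)"
  shows "(\<Sum>w\<in>{0..N}. \<rho> w * (\<Sum>w'\<in>{0..N}. P w w' * f w')^2) + \<kappa> * Sd N f
         \<le> (\<Sum>w'\<in>{0..N}. (\<Sum>w\<in>{0..N}. \<rho> w * P w w') * (f w')^2)"
proof -
  define X where "X w = (if w < N then \<rho> w * P w w * P w (Suc w) * (f w - f (Suc w))^2 else 0)" for w
  have row: "\<rho> w * (\<Sum>w'\<in>{0..N}. P w w' * f w')^2 + X w \<le> \<rho> w * (\<Sum>w'\<in>{0..N}. P w w' * (f w')^2)"
    if w: "w \<in> {0..N}" for w
  proof (cases "w < N")
    case True
    have "(\<Sum>w'\<in>{0..N}. P w w' * f w')^2 + P w w * P w (Suc w) * (f w - f (Suc w))^2 \<le> (\<Sum>w'\<in>{0..N}. P w w' * (f w')^2)"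
      by (rule row_ineq) (use w True P0 P1 in auto)
    from mult_left_mono[OF this rho0[OF w]] show ?thesis
      using True unfolding X_def by (simp add: algebra_simps)
  next
    case False
    have "(\<Sum>w'\<in>{0..N}. P w w' * f w')^2 \<le> (\<Sum>w'\<in>{0..N}. P w w' * (f w')^2)"
      by (rule jensen) (use w P0 P1 in auto)
    from mult_left_mono[OF this rho0[OF w]] show ?thesis
      using False unfolding X_def by simp
  qed
  have "\<kappa> * Sd N f \<le> (\<Sum>w<N. X w)"
    unfolding Sd_def sum_distrib_left
    by (rule sum_mono) (use kap in \<open>auto simp: X_def power2_commute intro!: mult_right_mono\<close>)
  also have "(\<Sum>w<N. X w) = (\<Sum>w\<in>{0..N}. X w)"
    by (rule sum.mono_neutral_left) (auto simp: X_def)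
  finally have "(\<Sum>w\<in>{0..N}. \<rho> w * (\<Sum>w'\<in>{0..N}. P w w' * f w')^2) + \<kappa> * Sd N f
      \<le> (\<Sum>w\<in>{0..N}. \<rho> w * (\<Sum>w'\<in>{0..N}. P w w' * f w')^2 + X w)"
    by (simp add: sum.distrib)
  also have "\<dots> \<le> (\<Sum>w\<in>{0..N}. \<rho> w * (\<Sum>w'\<in>{0..N}. P w w' * (f w')^2))"
    by (rule sum_mono) (use row in auto)
  also have "\<dots> = (\<Sum>w'\<in>{0..N}. (\<Sum>w\<in>{0..N}. \<rho> w * P w w') * (f w')^2)"
  proof -
    have "(\<Sum>w\<in>{0..N}. \<rho> w * (\<Sum>w'\<in>{0..N}. P w w' * (f w')^2)) = (\<Sum>w\<in>{0..N}. \<Sum>w'\<in>{0..N}. \<rho> w * P w w' * (f w')^2)"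
      by (simp add: sum_distrib_left mult.assoc)
    also have "\<dots> = (\<Sum>w'\<in>{0..N}. \<Sum>w\<in>{0..N}. \<rho> w * P w w' * (f w')^2)"
      by (rule sum.swap)
    also have "\<dots> = (\<Sum>w'\<in>{0..N}. (\<Sum>w\<in>{0..N}. \<rho> w * P w w') * (f w')^2)"
      by (simp add: sum_distrib_right)
    finally show ?thesis .
  qed
  finally show ?thesis .
qed



lemma telescope:
  fixes f :: "nat \<Rightarrow> real"
  assumes "a \<le> b"
  shows "\<bar>f b - f a\<bar> \<le> (\<Sum>v\<in>{a..<b}. \<bar>f (Suc v) - f v\<bar>)"
  using assms
proof (induction b)
  case 0 then show ?case by simp
next
  case (Suc b)
  show ?case
  proof (cases "a = Suc b")
    case True then show ?thesis by simp
  next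
    case False
    then have ab: "a \<le> b" using Suc.prems by simp
    have "\<bar>f (Suc b) - f a\<bar> \<le> \<bar>f (Suc b) - f b\<bar> + \<bar>f b - f a\<bar>" by simp
    also have "\<dots> \<le> \<bar>f (Suc b) - f b\<bar> + (\<Sum>v\<in>{a..<b}. \<bar>f (Suc v) - f v\<bar>)"
      using Suc.IH[OF ab] by simp
    also have "\<dots> = (\<Sum>v\<in>{a..<Suc b}. \<bar>f (Suc v) - f v\<bar>)" using ab by simp
    finally show ?thesis .
  qed
qed

lemma osc_bound:
  fixes f :: "nat \<Rightarrow> real"
  assumes "a \<le> N" "b \<le> N"
  shows "\<bar>f b - f a\<bar> \<le> (\<Sum>v<N. \<bar>f (Suc v) - f v\<bar>)"
proof -
  have gen: "\<bar>f y - f x\<bar> \<le> (\<Sum>v<N. \<bar>f (Suc v) - f v\<bar>)" if "x \<le> y" "y \<le> N" for x y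
  proof -
    have "\<bar>f y - f x\<bar> \<le> (\<Sum>v\<in>{x..<y}. \<bar>f (Suc v) - f v\<bar>)" by (rule telescope) fact
    also have "\<dots> \<le> (\<Sum>v<N. \<bar>f (Suc v) - f v\<bar>)"
      by (rule sum_mono2) (use that in auto)
    finally show ?thesis .
  qed
  show ?thesis
  proof (cases "a \<le> b")
    case True then show ?thesis using gen assms by simp
  next
    case False then show ?thesis using gen[of b a] assms by (simp add: abs_minus_commute)
  qed
qed

lemma sobolev:
  fixes \<nu> f :: "nat \<Rightarrow> real"
  assumes nu0: "\<And>w. w \<in> {0..N} \<Longrightarrow> \<nu> w \<ge> 0"
    and nu1: "(\<Sum>w\<in>{0..N}. \<nu> w) = 1"
    and f0: "\<And>w. w \<in> {0..N} \<Longrightarrow> f w \<ge> 0"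
    and f1: "(\<Sum>w\<in>{0..N}. \<nu> w * f w) = 1"
  defines "v \<equiv> (\<Sum>w\<in>{0..N}. \<nu> w * (f w)^2) - 1"
  shows "0 \<le> v" "v \<le> real N * Sd N f" "v^2 \<le> 4 * real N * Sd N f"
proof -
  define s where "s = (\<Sum>v<N. \<bar>f (Suc v) - f v\<bar>)"
  have fin: "finite (f ` {0..N})" "f ` {0..N} \<noteq> {}" by auto
  obtain w0 where w0: "w0 \<in> {0..N}" "f w0 = Min (f ` {0..N})"
    using Min_in[OF fin] unfolding image_iff by metis
  obtain w1 where w1: "w1 \<in> {0..N}" "f w1 = Max (f ` {0..N})"
    using Max_in[OF fin] unfolding image_iff by metis
  have "(\<Sum>w\<in>{0..N}. \<nu> w * f w0) \<le> (\<Sum>w\<in>{0..N}. \<nu> w * f w)"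
    by (rule sum_mono, rule mult_left_mono) (use w0 nu0 in auto)
  then have m1: "f w0 \<le> 1" using f1 nu1 by (simp add: sum_distrib_right[symmetric])
  have "(\<Sum>w\<in>{0..N}. \<nu> w * f w) \<le> (\<Sum>w\<in>{0..N}. \<nu> w * f w1)"
    by (rule sum_mono, rule mult_left_mono) (use w1 nu0 in auto)
  then have M1: "f w1 \<ge> 1" using f1 nu1 by (simp add: sum_distrib_right[symmetric])
  have dev: "\<bar>f w - 1\<bar> \<le> s" if w: "w \<in> {0..N}" for w
  proof -
    have "\<bar>f w - f w0\<bar> \<le> s" "\<bar>f w1 - f w\<bar> \<le> s"
      unfolding s_def by (rule osc_bound; use w w0 w1 in auto)+
    then show ?thesis using m1 M1 by linarith
  qed
  have veq: "v = (\<Sum>w\<in>{0..N}. \<nu> w * (f w - 1)^2)"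
  proof -
    have "(\<Sum>w\<in>{0..N}. \<nu> w * (f w - 1)^2) = (\<Sum>w\<in>{0..N}. \<nu> w * (f w)^2 - 2 * (\<nu> w * f w) + \<nu> w)"
      by (rule sum.cong) (auto simp: power2_eq_square algebra_simps)
    also have "\<dots> = (\<Sum>w\<in>{0..N}. \<nu> w * (f w)^2) - 2 * (\<Sum>w\<in>{0..N}. \<nu> w * f w) + (\<Sum>w\<in>{0..N}. \<nu> w)"
      by (simp add: sum.distrib sum_subtractf sum_distrib_left)
    finally show ?thesis using f1 nu1 unfolding v_def by simp
  qed
  show "0 \<le> v" unfolding veq by (intro sum_nonneg) (simp add: nu0)
  have s0: "s \<ge> 0" unfolding s_def by (simp add: sum_nonneg)
  have "v \<le> (\<Sum>w\<in>{0..N}. \<nu> w * s^2)" unfolding veq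
  proof (rule sum_mono)
    fix w assume w: "w \<in> {0..N}"
    have "(f w - 1)^2 \<le> s^2"
      using dev[OF w] by (metis abs_ge_zero power2_abs power_mono)
    then show "\<nu> w * (f w - 1)^2 \<le> \<nu> w * s^2" using nu0[OF w] by (rule mult_left_mono)
  qed
  also have "\<dots> = s^2" using nu1 by (simp add: sum_distrib_right[symmetric])
  finally have vs2: "v \<le> s^2" .
  have "v \<le> (\<Sum>w\<in>{0..N}. s * (\<nu> w * f w + \<nu> w))" unfolding veq
  proof (rule sum_mono)
    fix w assume w: "w \<in> {0..N}"
    have "(f w - 1)^2 = \<bar>f w - 1\<bar> * \<bar>f w - 1\<bar>" by (simp add: power2_eq_square)
    also have "\<dots> \<le> s * (f w + 1)"
      by (rule mult_mono) (use dev[OF w] f0[OF w] s0 in auto)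
    finally show "\<nu> w * (f w - 1)^2 \<le> s * (\<nu> w * f w + \<nu> w)"
      using mult_left_mono[OF _ nu0[OF w], of "(f w - 1)^2" "s * (f w + 1)"] by (simp add: algebra_simps)
  qed
  also have "\<dots> = 2 * s" using f1 nu1 by (simp add: sum_distrib_left[symmetric] sum.distrib)
  finally have v2s: "v \<le> 2 * s" .
  have "s^2 \<le> (\<Sum>v<N. (\<bar>f (Suc v) - f v\<bar>)^2) * card {..<N}"
    unfolding s_def by (rule sum_squared_le_sum_of_squares)
  then have sS: "s^2 \<le> real N * Sd N f" unfolding Sd_def by (simp add: mult.commute)
  show "v \<le> real N * Sd N f" using vs2 sS by linarith
  have "v^2 \<le> (2*s)^2" using v2s \<open>0 \<le> v\<close> by (rule power_mono)
  then show "v^2 \<le> 4 * real N * Sd N f" using sS by (simp add: power_mult_distrib)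
qed



lemma seq_poly:
  fixes v :: "nat \<Rightarrow> real" and D :: real
  assumes D: "D > 0"
    and hyp: "\<And>k. k < M \<Longrightarrow> 0 \<le> v k \<and> v (Suc k) \<le> v k - (v k)^2 / D"
  shows "1 \<le> k \<Longrightarrow> k \<le> M \<Longrightarrow> v k \<le> D / real k"
proof (induction k)
  case 0 then show ?case by simp
next
  case (Suc k)
  have hk: "0 \<le> v k" "v (Suc k) \<le> v k - (v k)^2 / D" using hyp[of k] Suc.prems by auto
  show ?case
  proof (cases "k = 0")
    case True
    have "D * (v k - (v k)^2 / D) \<le> D * D"
    proof -
      have "D * (v k - (v k)^2 / D) = D * v k - (v k)^2" using D by (simp add: field_simps power2_eq_square)
      also have "\<dots> \<le> D * D"
      proof -
        have e: "D * v k - (v k)^2 = D * D - ((v k - D/2)^2 + 3/4 * D^2)"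
          by (simp add: power2_eq_square algebra_simps)
        have "0 \<le> (v k - D/2)^2 + 3/4 * D^2" by simp
        then show ?thesis unfolding e by linarith
      qed
      finally show ?thesis .
    qed
    then have "v k - (v k)^2 / D \<le> D" using D by (simp add: mult_le_cancel_left_pos)
    then show ?thesis using True hk by simp
  next
    case False
    have IH: "v k \<le> D / real k" using Suc False by simp
    show ?thesis
    proof (cases "v k \<le> D / real (Suc k)")
      case True
      have "0 \<le> (v k)^2 / D" using D by simp
      then have "v (Suc k) \<le> v k" using hk by linarith
      then show ?thesis using True by linarith
    next
      case F2: False
      have kpos: "real k > 0" using False by simp
      have a: "v k / D > 1 / real (Suc k)" using F2 D by (simp add: field_simps)
      have "v (Suc k) \<le> v k * (1 - v k / D)" using hk(2) by (simp add: power2_eq_square algebra_simps)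
      also have "\<dots> \<le> v k * (real k / real (Suc k))"
      proof (rule mult_left_mono)
        show "1 - v k / D \<le> real k / real (Suc k)" using a by (simp add: field_simps)
      qed (use hk in auto)
      also have "\<dots> \<le> (D / real k) * (real k / real (Suc k))"
        by (rule mult_right_mono) (use IH in auto)
      also have "\<dots> = D / real (Suc k)" using kpos by simp
      finally show ?thesis .
    qed
  qed
qed

lemma seq_geom:
  fixes v :: "nat \<Rightarrow> real" and q :: real
  assumes q: "q \<ge> 0"
    and hyp: "\<And>k. k < M \<Longrightarrow> v (Suc k) \<le> q * v k"
  shows "k0 + i \<le> M \<Longrightarrow> v (k0 + i) \<le> q ^ i * v k0"
proof (induction i)
  case 0 then show ?case by simp
next
  case (Suc i)
  have "v (k0 + Suc i) \<le> q * v (k0 + i)" using hyp[of "k0 + i"] Suc.prems by simp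
  also have "\<dots> \<le> q * (q ^ i * v k0)" using Suc q by (intro mult_left_mono) auto
  finally show ?case by (simp add: mult.assoc)
qed

lemma seq_decay:
  fixes v :: "nat \<Rightarrow> real" and D t :: real
  assumes D: "D \<ge> 1"
    and hyp: "\<And>k. k < M \<Longrightarrow> 0 \<le> v k \<and> v (Suc k) \<le> v k - (v k)^2 / D \<and> v (Suc k) \<le> (1 - 1/D) * v k"
    and k0: "1 \<le> k0" "D \<le> real k0" and i: "D * t \<le> real i" and M: "k0 + i \<le> M"
  shows "v (k0 + i) \<le> exp (- t)"
proof -
  have vk0: "v k0 \<le> D / real k0" using seq_poly[of D M v k0] hyp D k0 M by auto
  also have "\<dots> \<le> 1" using k0 D by simp
  finally have vk01: "v k0 \<le> 1" .
  have q0: "0 \<le> 1 - 1/D" using D by simp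
  have "v (k0 + i) \<le> (1 - 1/D) ^ i * v k0"
    using seq_geom[OF q0, of M v k0 i] hyp M by auto
  also have "\<dots> \<le> (1 - 1/D) ^ i * 1"
    by (rule mult_left_mono) (use vk01 q0 in auto)
  also have "\<dots> \<le> exp (- 1/D) ^ i"
  proof -
    have "1 - 1/D \<le> exp (- 1/D)" using exp_ge_add_one_self[of "- 1/D"] by simp
    then show ?thesis using q0 by (simp add: power_mono)
  qed
  also have "\<dots> = exp (real i * (- 1/D))" by (rule exp_of_nat_mult[symmetric])
  also have "\<dots> \<le> exp (- t)"
  proof -
    have "t \<le> real i / D" using i D by (simp add: field_simps)
    then show ?thesis by simp
  qed
  finally show ?thesis .
qed



lemma kmul_assoc: "kmul N (kmul N A B) C = kmul N A (kmul N B C)"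
  unfolding kmul_def
  by (auto simp: sum_distrib_left sum_distrib_right mult.assoc intro!: ext sum.swap)

lemma kmul_id_right:
  assumes "y \<in> {0..N}"
  shows "kmul N A (\<lambda>x y. if x = y then 1 else 0) x y = A x y"
  using assms unfolding kmul_def by (simp add: if_distrib cong: if_cong)

fun kback :: "nat \<Rightarrow> (nat \<Rightarrow> nat \<Rightarrow> nat \<Rightarrow> real) \<Rightarrow> nat \<Rightarrow> nat \<Rightarrow> (nat \<Rightarrow> nat \<Rightarrow> real)" where
  "kback N K n 0 = (\<lambda>x y. if x = y then 1 else 0)"
| "kback N K n (Suc j) = kmul N (K (n - j)) (kback N K n j)"

lemma kdecomp:
  assumes "j \<le> n" "y \<in> {0..N}"
  shows "kprod N K n x y = kmul N (kprod N K (n - j)) (kback N K n j) x y"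
  using assms
proof (induction j arbitrary: x y)
  case 0
  then show ?case by (simp add: kmul_id_right)
next
  case (Suc j)
  have e: "n - j = Suc (n - Suc j)" using Suc.prems by simp
  have "kprod N K (n - j) = kmul N (kprod N K (n - Suc j)) (K (n - j))"
    by (subst e, simp, subst e, simp)
  then have "kmul N (kprod N K (n - j)) (kback N K n j) = kmul N (kprod N K (n - Suc j)) (kback N K n (Suc j))"
    by (simp add: kmul_assoc)
  then show ?case using Suc by (metis Suc_leD)
qed



lemma combine:
  fixes v v' S \<kappa> :: real and n :: real
  assumes "\<kappa> > 0" "n > 0" "0 \<le> v" "v \<le> n * S" "v^2 \<le> 4 * n * S" "v' + \<kappa> * S \<le> v"
  shows "v' \<le> v - v^2 / (4 * n / \<kappa>)" "v' \<le> (1 - 1 / (4 * n / \<kappa>)) * v"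
proof -
  have e1: "v^2 / (4 * n / \<kappa>) = \<kappa> * (v^2 / (4 * n))" using assms by (simp add: field_simps)
  have "v^2 / (4*n) \<le> S" using assms by (simp add: field_simps)
  then have "\<kappa> * (v^2 / (4 * n)) \<le> \<kappa> * S" using assms(1) by (intro mult_left_mono) auto
  then show "v' \<le> v - v^2 / (4 * n / \<kappa>)" using assms e1 by linarith
  have e2: "(1 - 1 / (4 * n / \<kappa>)) * v = v - \<kappa> * (v / n) / 4" using assms by (simp add: field_simps)
  have "v / n \<le> S" using assms by (simp add: field_simps mult.commute)
  then have "\<kappa> * (v / n) \<le> \<kappa> * S" using assms(1) by (intro mult_left_mono) auto
  moreover have "0 \<le> \<kappa> * (v / n)" using assms by simp
  ultimately have "v' \<le> v - \<kappa> * (v / n) / 4"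
  proof -
    define X where "X = \<kappa> * (v / n)"
    assume "\<kappa> * (v / n) \<le> \<kappa> * S" "0 \<le> \<kappa> * (v / n)"
    then have "X \<le> \<kappa> * S" "0 \<le> X" unfolding X_def by auto
    then have "v' \<le> v - X / 4" using assms(6) by linarith
    then show ?thesis unfolding X_def .
  qed
  then show "v' \<le> (1 - 1 / (4 * n / \<kappa>)) * v" using e2 by simp
qed

lemma decay_generic:
  fixes \<nu> F :: "nat \<Rightarrow> nat \<Rightarrow> real" and \<kappa> t :: real
  assumes N: "N \<ge> 1" and kap: "\<kappa> > 0"
    and nu0: "\<And>k w. k \<le> M \<Longrightarrow> w \<in> {0..N} \<Longrightarrow> \<nu> k w \<ge> 0"
    and nu1: "\<And>k. k \<le> M \<Longrightarrow> (\<Sum>w\<in>{0..N}. \<nu> k w) = 1"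
    and F0: "\<And>k w. k \<le> M \<Longrightarrow> w \<in> {0..N} \<Longrightarrow> F k w \<ge> 0"
    and F1: "\<And>k. k \<le> M \<Longrightarrow> (\<Sum>w\<in>{0..N}. \<nu> k w * F k w) = 1"
    and stp: "\<And>k. k < M \<Longrightarrow> (\<Sum>w\<in>{0..N}. \<nu> (Suc k) w * (F (Suc k) w)^2) + \<kappa> * Sd N (F k)
                 \<le> (\<Sum>w\<in>{0..N}. \<nu> k w * (F k w)^2)"
    and D1: "4 * real N / \<kappa> \<ge> 1"
    and kz: "1 \<le> kz" "4 * real N / \<kappa> \<le> real kz" and i: "4 * real N / \<kappa> * t \<le> real i"
    and M: "kz + i = M"
  shows "(\<Sum>w\<in>{0..N}. \<nu> M w * (F M w)^2) - 1 \<le> exp (- t)"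
proof -
  define v where "v k = (\<Sum>w\<in>{0..N}. \<nu> k w * (F k w)^2) - 1" for k
  have hyp: "0 \<le> v k \<and> v (Suc k) \<le> v k - (v k)^2 / (4 * real N / \<kappa>) \<and> v (Suc k) \<le> (1 - 1/(4 * real N / \<kappa>)) * v k"
    if k: "k < M" for k
  proof -
    have s: "0 \<le> v k" "v k \<le> real N * Sd N (F k)" "(v k)^2 \<le> 4 * real N * Sd N (F k)"
      unfolding v_def by (rule sobolev[of N "\<nu> k" "F k"]; use nu0 nu1 F0 F1 k in auto)+
    have st: "v (Suc k) + \<kappa> * Sd N (F k) \<le> v k" using stp[OF k] unfolding v_def by simp
    show ?thesis using combine[OF kap _ s st] N s(1) by auto
  qed
  have "v (kz + i) \<le> exp (- t)"
    by (rule seq_decay[where M = M and D = "4 * real N / \<kappa>"]) (use hyp D1 kz i M in auto)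
  then show ?thesis using M unfolding v_def by simp
qed

lemma cross:
  fixes \<nu> F G :: "nat \<Rightarrow> real"
  assumes nu0: "\<And>w. w \<in> {0..N} \<Longrightarrow> \<nu> w \<ge> 0" and nu1: "(\<Sum>w\<in>{0..N}. \<nu> w) = 1"
    and F1: "(\<Sum>w\<in>{0..N}. \<nu> w * F w) = 1" and G1: "(\<Sum>w\<in>{0..N}. \<nu> w * G w) = 1"
  shows "\<bar>(\<Sum>w\<in>{0..N}. \<nu> w * F w * G w) - 1\<bar>
     \<le> (((\<Sum>w\<in>{0..N}. \<nu> w * (F w)^2) - 1) + ((\<Sum>w\<in>{0..N}. \<nu> w * (G w)^2) - 1)) / 2"
proof -
  have e1: "(\<Sum>w\<in>{0..N}. \<nu> w * F w * G w) - 1 = (\<Sum>w\<in>{0..N}. \<nu> w * ((F w - 1) * (G w - 1)))"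
  proof -
    have "(\<Sum>w\<in>{0..N}. \<nu> w * ((F w - 1) * (G w - 1))) = (\<Sum>w\<in>{0..N}. \<nu> w * F w * G w - \<nu> w * F w - \<nu> w * G w + \<nu> w)"
      by (rule sum.cong) (auto simp: algebra_simps)
    also have "\<dots> = (\<Sum>w\<in>{0..N}. \<nu> w * F w * G w) - 1"
      using F1 G1 nu1 by (simp add: sum.distrib sum_subtractf)
    finally show ?thesis by simp
  qed
  have e2: "(\<Sum>w\<in>{0..N}. \<nu> w * (H w)^2) - 1 = (\<Sum>w\<in>{0..N}. \<nu> w * (H w - 1)^2)"
    if H1: "(\<Sum>w\<in>{0..N}. \<nu> w * H w) = 1" for H :: "nat \<Rightarrow> real"
  proof -
    have "(\<Sum>w\<in>{0..N}. \<nu> w * (H w - 1)^2) = (\<Sum>w\<in>{0..N}. \<nu> w * (H w)^2 - 2 * (\<nu> w * H w) + \<nu> w)"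
      by (rule sum.cong) (auto simp: power2_eq_square algebra_simps)
    also have "\<dots> = (\<Sum>w\<in>{0..N}. \<nu> w * (H w)^2) - 1"
      using H1 nu1 by (simp add: sum.distrib sum_subtractf sum_distrib_left[symmetric])
    finally show ?thesis by simp
  qed
  have "\<bar>\<Sum>w\<in>{0..N}. \<nu> w * ((F w - 1) * (G w - 1))\<bar> \<le> (\<Sum>w\<in>{0..N}. \<bar>\<nu> w * ((F w - 1) * (G w - 1))\<bar>)"
    by (rule sum_abs)
  also have "\<dots> \<le> (\<Sum>w\<in>{0..N}. (\<nu> w * (F w - 1)^2 + \<nu> w * (G w - 1)^2) / 2)"
  proof (rule sum_mono)
    fix w assume w: "w \<in> {0..N}"
    have a: "\<bar>(F w - 1) * (G w - 1)\<bar> \<le> ((F w - 1)^2 + (G w - 1)^2) / 2"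
    proof -
      have "0 \<le> (\<bar>F w - 1\<bar> - \<bar>G w - 1\<bar>)^2" by simp
      then show ?thesis unfolding abs_mult by (simp add: power2_eq_square algebra_simps)
    qed
    have "\<bar>\<nu> w * ((F w - 1) * (G w - 1))\<bar> = \<nu> w * \<bar>(F w - 1) * (G w - 1)\<bar>"
      using nu0[OF w] by (simp add: abs_mult)
    also have "\<dots> \<le> \<nu> w * (((F w - 1)^2 + (G w - 1)^2) / 2)" using a nu0[OF w] by (rule mult_left_mono)
    finally show "\<bar>\<nu> w * ((F w - 1) * (G w - 1))\<bar> \<le> (\<nu> w * (F w - 1)^2 + \<nu> w * (G w - 1)^2) / 2"
      by (simp add: algebra_simps)
  qed
  also have "\<dots> = ((\<Sum>w\<in>{0..N}. \<nu> w * (F w - 1)^2) + (\<Sum>w\<in>{0..N}. \<nu> w * (G w - 1)^2)) / 2"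
    by (simp add: sum.distrib sum_divide_distrib[symmetric])
  finally show ?thesis using e1 e2[OF F1] e2[OF G1] by simp
qed



definition mu :: "nat \<Rightarrow> (nat \<Rightarrow> nat \<Rightarrow> nat \<Rightarrow> real) \<Rightarrow> nat \<Rightarrow> nat \<Rightarrow> real" where
  "mu N K k w = (\<Sum>y\<in>{0..N}. uniform N y * kprod N K k y w)"

locale model =
  fixes N :: nat and K :: "nat \<Rightarrow> nat \<Rightarrow> nat \<Rightarrow> real" and c :: real
  assumes c1: "c \<ge> 1"
    and Kmk: "\<And>i. i \<ge> 1 \<Longrightarrow> markov_kernel N (K i)"
    and Kdiag: "\<And>i v. i \<ge> 1 \<Longrightarrow> v \<le> N \<Longrightarrow> K i v v \<ge> 1/4"
    and Kup: "\<And>i v. i \<ge> 1 \<Longrightarrow> v < N \<Longrightarrow> K i v (Suc v) \<ge> 1/4"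
    and Kdn: "\<And>i v. i \<ge> 1 \<Longrightarrow> v < N \<Longrightarrow> K i (Suc v) v \<ge> 1/4"
    and stab: "\<And>n w. w \<le> N \<Longrightarrow> 1 / (c * (N+1)) \<le> mu N K n w \<and> mu N K n w \<le> c / (N+1)"
begin

lemma K0: "i \<ge> 1 \<Longrightarrow> x \<le> N \<Longrightarrow> y \<le> N \<Longrightarrow> K i x y \<ge> 0"
  using Kmk unfolding markov_kernel_def by auto

lemma K1: "i \<ge> 1 \<Longrightarrow> x \<le> N \<Longrightarrow> (\<Sum>y\<in>{0..N}. K i x y) = 1"
  using Kmk unfolding markov_kernel_def by auto

lemma kprod0: "x \<le> N \<Longrightarrow> y \<le> N \<Longrightarrow> kprod N K k x y \<ge> 0"
proof (induction k arbitrary: y)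
  case 0 then show ?case by simp
next
  case (Suc k)
  then show ?case by (auto simp: kmul_def intro!: sum_nonneg mult_nonneg_nonneg K0)
qed

lemma kprod1: "x \<le> N \<Longrightarrow> (\<Sum>y\<in>{0..N}. kprod N K k x y) = 1"
proof (induction k)
  case 0 then show ?case by simp
next
  case (Suc k)
  have "(\<Sum>y\<in>{0..N}. kprod N K (Suc k) x y) = (\<Sum>y\<in>{0..N}. \<Sum>z\<in>{0..N}. kprod N K k x z * K (Suc k) z y)"
    by (simp add: kmul_def)
  also have "\<dots> = (\<Sum>z\<in>{0..N}. \<Sum>y\<in>{0..N}. kprod N K k x z * K (Suc k) z y)" by (rule sum.swap)
  also have "\<dots> = (\<Sum>z\<in>{0..N}. kprod N K k x z)"
    by (rule sum.cong) (auto simp: sum_distrib_left[symmetric] K1)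
  finally show ?case using Suc by simp
qed

lemma kback0: "j \<le> n \<Longrightarrow> x \<le> N \<Longrightarrow> y \<le> N \<Longrightarrow> kback N K n j x y \<ge> 0"
proof (induction j arbitrary: x)
  case 0 then show ?case by simp
next
  case (Suc j)
  then show ?case by (auto simp: kmul_def intro!: sum_nonneg mult_nonneg_nonneg K0)
qed

abbreviation "m \<equiv> mu N K"

lemma mu_pos: "w \<le> N \<Longrightarrow> m k w > 0"
proof -
  assume "w \<le> N"
  then have "1 / (c * (N+1)) \<le> m k w" using stab by auto
  moreover have "1 / (c * (N+1)) > 0" using c1 by simp
  ultimately show ?thesis by linarith
qed

lemma mu_suc: "m (Suc k) w' = (\<Sum>w\<in>{0..N}. m k w * K (Suc k) w w')"
proof -
  have "m (Suc k) w' = (\<Sum>y\<in>{0..N}. \<Sum>w\<in>{0..N}. uniform N y * kprod N K k y w * K (Suc k) w w')"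
    by (simp add: mu_def kmul_def sum_distrib_left mult.assoc)
  also have "\<dots> = (\<Sum>w\<in>{0..N}. \<Sum>y\<in>{0..N}. uniform N y * kprod N K k y w * K (Suc k) w w')"
    by (rule sum.swap)
  also have "\<dots> = (\<Sum>w\<in>{0..N}. m k w * K (Suc k) w w')"
    by (simp add: mu_def sum_distrib_right)
  finally show ?thesis .
qed

lemma mu_sum: "(\<Sum>w\<in>{0..N}. m k w) = 1"
proof -
  have "(\<Sum>w\<in>{0..N}. m k w) = (\<Sum>y\<in>{0..N}. \<Sum>w\<in>{0..N}. uniform N y * kprod N K k y w)"
    unfolding mu_def by (rule sum.swap)
  also have "\<dots> = (\<Sum>y\<in>{0..N}. uniform N y)"
    by (rule sum.cong) (auto simp: sum_distrib_left[symmetric] kprod1)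
  also have "\<dots> = 1" by (simp add: uniform_def)
  finally show ?thesis .
qed

lemma mu0: "w \<in> {0..N} \<Longrightarrow> m k w \<ge> 0" using mu_pos[of w k] by simp

end


context model begin

definition kap :: real where "kap = 1 / (16 * c^3 * (N+1))"

lemma kap_pos: "kap > 0" using c1 by (simp add: kap_def)

definition F :: "nat \<Rightarrow> nat \<Rightarrow> nat \<Rightarrow> real" where
  "F x k w = kprod N K k x w / m k w"

lemma mu_ne[simp]: "w \<le> N \<Longrightarrow> m k w \<noteq> 0" using mu_pos[of w k] by simp

lemma F0: "x \<le> N \<Longrightarrow> w \<le> N \<Longrightarrow> F x k w \<ge> 0"
  unfolding F_def using kprod0 mu_pos by (simp add: less_imp_le)

lemma F1: "x \<le> N \<Longrightarrow> (\<Sum>w\<in>{0..N}. m k w * F x k w) = 1"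
proof -
  assume x: "x \<le> N"
  have "(\<Sum>w\<in>{0..N}. m k w * F x k w) = (\<Sum>w\<in>{0..N}. kprod N K k x w)"
    by (rule sum.cong) (auto simp: F_def)
  then show ?thesis using kprod1[OF x] by simp
qed

lemma fwd_kappa:
  assumes v: "v < N"
  shows "kap \<le> m (Suc k) v * (m k v * K (Suc k) v v / m (Suc k) v) * (m k (Suc v) * K (Suc k) (Suc v) v / m (Suc k) v)"
proof -
  define L where "L = 1 / (c * (N+1))"
  define a where "a = m k v"
  define b where "b = m k (Suc v)"
  define d where "d = m (Suc k) v"
  define p where "p = K (Suc k) v v"
  define q where "q = K (Suc k) (Suc v) v"
  have L0: "L > 0" using c1 by (simp add: L_def)
  have a: "L \<le> a" "L \<le> b" using stab v unfolding L_def a_def b_def by (auto simp: less_imp_le)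
  have d: "d \<le> c / (N+1)" "d > 0" using stab[of v "Suc k"] mu_pos[of v "Suc k"] v unfolding d_def by auto
  have pq: "1/4 \<le> p" "1/4 \<le> q" using Kdiag[of "Suc k" v] Kdn[of "Suc k" v] v unfolding p_def q_def by auto
  have X1: "L * (1/4) \<le> a * p" by (rule mult_mono) (use a pq L0 in auto)
  have X2: "L * (1/4) \<le> b * q" by (rule mult_mono) (use a pq L0 in auto)
  have ap: "0 \<le> a * p" "0 \<le> b * q" using a pq L0 by simp_all
  then have "(L * (1/4)) * (L * (1/4)) \<le> (a * p) * (b * q)"
    using mult_mono[OF X1 X2] L0 by simp
  then have I1: "(L * (1/4)) * (L * (1/4)) / (c / (N+1)) \<le> (a * p) * (b * q) / d"
    using d L0 c1 ap by (intro frac_le) auto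
  have I2: "(L * (1/4)) * (L * (1/4)) / (c / (N+1)) = kap"
  proof -
    have cz: "c > 0" using c1 by auto
    have g: "((1/(c*r))*(1/4))*((1/(c*r))*(1/4))/(c/r) = 1/(16*c^3*r)" if r: "r > 0" for r :: real
      using r cz by (simp add: field_simps power3_eq_cube)
    show ?thesis unfolding L_def kap_def using g[of "real N + 1"] by simp
  qed
  have I3: "d * (a * p / d) * (b * q / d) = (a * p) * (b * q) / d"
    using d by (simp add: field_simps power2_eq_square)
  have "kap \<le> d * (a * p / d) * (b * q / d)" unfolding I3 using I1 I2 by linarith
  then show ?thesis unfolding a_def b_def d_def p_def q_def .
qed

lemma fwd_step:
  assumes x: "x \<le> N"
  shows "(\<Sum>w\<in>{0..N}. m (Suc k) w * (F x (Suc k) w)^2) + kap * Sd N (F x k)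
       \<le> (\<Sum>w\<in>{0..N}. m k w * (F x k w)^2)"
proof -
  define P where "P w' w = m k w * K (Suc k) w w' / m (Suc k) w'" for w' w
  have P0: "P w' w \<ge> 0" if "w' \<in> {0..N}" "w \<in> {0..N}" for w' w
    unfolding P_def using that mu0 K0[of "Suc k" w w'] by (auto intro!: divide_nonneg_nonneg)
  have P1: "(\<Sum>w\<in>{0..N}. P w' w) = 1" if "w' \<in> {0..N}" for w'
  proof -
    have "(\<Sum>w\<in>{0..N}. P w' w) = (\<Sum>w\<in>{0..N}. m k w * K (Suc k) w w') / m (Suc k) w'"
      unfolding P_def by (simp add: sum_divide_distrib)
    then show ?thesis using mu_suc[of k w'] mu_pos[of w' "Suc k"] that by simp
  qed
  have Pf: "(\<Sum>w\<in>{0..N}. P w' w * F x k w) = F x (Suc k) w'" if "w' \<in> {0..N}" for w'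
  proof -
    have "(\<Sum>w\<in>{0..N}. P w' w * F x k w) = (\<Sum>w\<in>{0..N}. kprod N K k x w * K (Suc k) w w') / m (Suc k) w'"
      unfolding sum_divide_distrib
      by (rule sum.cong) (auto simp: P_def F_def)
    then show ?thesis by (simp add: F_def kmul_def)
  qed
  have sig: "(\<Sum>w'\<in>{0..N}. m (Suc k) w' * P w' w) = m k w" if "w \<in> {0..N}" for w
  proof -
    have "(\<Sum>w'\<in>{0..N}. m (Suc k) w' * P w' w) = (\<Sum>w'\<in>{0..N}. m k w * K (Suc k) w w')"
      by (rule sum.cong) (auto simp: P_def)
    also have "\<dots> = m k w" using K1[of "Suc k" w] that by (simp add: sum_distrib_left[symmetric])
    finally show ?thesis .
  qed
  have "(\<Sum>w'\<in>{0..N}. m (Suc k) w' * (\<Sum>w\<in>{0..N}. P w' w * F x k w)^2) + kap * Sd N (F x k)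
      \<le> (\<Sum>w\<in>{0..N}. (\<Sum>w'\<in>{0..N}. m (Suc k) w' * P w' w) * (F x k w)^2)"
    by (rule step_ineq) (use mu0 P0 P1 fwd_kappa in \<open>auto simp: P_def\<close>)
  also have "\<dots> = (\<Sum>w\<in>{0..N}. m k w * (F x k w)^2)"
    by (rule sum.cong) (use sig in auto)
  finally show ?thesis using Pf by simp
qed

end


context model begin

definition G :: "nat \<Rightarrow> nat \<Rightarrow> nat \<Rightarrow> nat \<Rightarrow> real" where
  "G n z j w = kback N K n j w z / m n z"

lemma G0: "j \<le> n \<Longrightarrow> z \<le> N \<Longrightarrow> w \<le> N \<Longrightarrow> G n z j w \<ge> 0"
  unfolding G_def using kback0 mu_pos by (simp add: less_imp_le)

lemma back_decomp:
  assumes j: "j \<le> n" and z: "z \<le> N"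
  shows "(\<Sum>w\<in>{0..N}. m (n - j) w * kback N K n j w z) = m n z"
proof -
  have "(\<Sum>w\<in>{0..N}. m (n - j) w * kback N K n j w z)
      = (\<Sum>w\<in>{0..N}. \<Sum>y\<in>{0..N}. uniform N y * (kprod N K (n - j) y w * kback N K n j w z))"
    by (simp add: mu_def sum_distrib_right mult.assoc)
  also have "\<dots> = (\<Sum>y\<in>{0..N}. \<Sum>w\<in>{0..N}. uniform N y * (kprod N K (n - j) y w * kback N K n j w z))"
    by (rule sum.swap)
  also have "\<dots> = (\<Sum>y\<in>{0..N}. uniform N y * kprod N K n y z)"
    by (rule sum.cong) (use kdecomp[OF j] z in \<open>auto simp: kmul_def sum_distrib_left[symmetric]\<close>)
  finally show ?thesis by (simp add: mu_def)
qed

lemma G1: "j \<le> n \<Longrightarrow> z \<le> N \<Longrightarrow> (\<Sum>w\<in>{0..N}. m (n - j) w * G n z j w) = 1"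
proof -
  assume j: "j \<le> n" and z: "z \<le> N"
  have "(\<Sum>w\<in>{0..N}. m (n - j) w * G n z j w) = (\<Sum>w\<in>{0..N}. m (n - j) w * kback N K n j w z) / m n z"
    by (simp add: G_def sum_divide_distrib)
  then show ?thesis using back_decomp[OF j z] z by simp
qed

lemma bwd_step:
  assumes j: "j < n" and z: "z \<le> N"
  shows "(\<Sum>w\<in>{0..N}. m (n - Suc j) w * (G n z (Suc j) w)^2) + kap * Sd N (G n z j)
       \<le> (\<Sum>w\<in>{0..N}. m (n - j) w * (G n z j w)^2)"
proof -
  have nj: "Suc (n - Suc j) = n - j" "n - j \<ge> 1" using j by auto
  have Pf: "(\<Sum>w'\<in>{0..N}. K (n - j) w w' * G n z j w') = G n z (Suc j) w" for w
    by (simp add: G_def kmul_def sum_divide_distrib mult.assoc)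
  have sig: "(\<Sum>w\<in>{0..N}. m (n - Suc j) w * K (n - j) w w') = m (n - j) w'" for w'
    using mu_suc[of "n - Suc j" w'] nj by simp
  have kp: "kap \<le> m (n - Suc j) v * K (n - j) v v * K (n - j) v (Suc v)" if v: "v < N" for v
  proof -
    define L where "L = 1 / (c * (N+1))"
    have L0: "L > 0" using c1 by (simp add: L_def)
    have a: "L \<le> m (n - Suc j) v" using stab v unfolding L_def by (auto simp: less_imp_le)
    have pq: "1/4 \<le> K (n - j) v v" "1/4 \<le> K (n - j) v (Suc v)" using Kdiag Kup nj v by auto
    have "L * (1/4) \<le> m (n - Suc j) v * K (n - j) v v" by (rule mult_mono) (use a pq L0 in auto)
    then have "L * (1/4) * (1/4) \<le> m (n - Suc j) v * K (n - j) v v * K (n - j) v (Suc v)"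
      by (rule mult_mono) (use a pq L0 in auto)
    moreover have "kap \<le> L * (1/4) * (1/4)"
    proof -
      have cz: "c > 0" using c1 by simp
      have "1 \<le> c^2" using c1 by (simp add: one_le_power)
      then have "c * 1 \<le> c * c^2" using cz by (intro mult_left_mono) auto
      then have "c \<le> c^3" by (simp add: power3_eq_cube power2_eq_square)
      then have "16 * c * (N+1) \<le> 16 * c^3 * (N+1)" by simp
      then have "1 / (16 * c^3 * (N+1)) \<le> 1 / (16 * c * (N+1))"
        using cz by (intro divide_left_mono) auto
      then show ?thesis unfolding kap_def L_def by simp
    qed
    ultimately show ?thesis by linarith
  qed
  have "(\<Sum>w\<in>{0..N}. m (n - Suc j) w * (\<Sum>w'\<in>{0..N}. K (n - j) w w' * G n z j w')^2) + kap * Sd N (G n z j)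
      \<le> (\<Sum>w'\<in>{0..N}. (\<Sum>w\<in>{0..N}. m (n - Suc j) w * K (n - j) w w') * (G n z j w')^2)"
    by (rule step_ineq) (use mu0 K0 K1 nj kp in auto)
  then show ?thesis unfolding Pf sig .
qed

end


lemma nat_ceil_le: "x \<ge> 0 \<Longrightarrow> real (nat \<lceil>x\<rceil>) \<le> x + 1"
proof -
  assume x: "x \<ge> 0"
  then have "real (nat \<lceil>x\<rceil>) = real_of_int \<lceil>x\<rceil>" by simp
  then show ?thesis using ceiling_correct[of x] by linarith
qed

context model begin

definition DD :: real where "DD = 4 * real N / kap"
definition tt :: "real \<Rightarrow> real" where "tt eps = ln (4 / eps)"
definition LL :: "real \<Rightarrow> nat" where "LL eps = nat \<lceil>DD\<rceil> + nat \<lceil>DD * tt eps\<rceil>"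

lemma DD_ge: "N \<ge> 1 \<Longrightarrow> DD \<ge> 1"
proof -
  assume N: "N \<ge> 1"
  have "DD = 64 * c^3 * real N * (real N + 1)" unfolding DD_def kap_def using c1 by (simp add: field_simps)
  moreover have "1 \<le> c^3" using c1 by (simp add: one_le_power)
  moreover have "1 \<le> real N * (real N + 1)"
  proof -
    have "1 * 1 \<le> real N * (real N + 1)" using N by (intro mult_mono) auto
    then show ?thesis by simp
  qed
  ultimately have "1 * 1 \<le> c^3 * (real N * (real N + 1))" by (intro mult_mono) (use c1 in auto)
  then show ?thesis using \<open>DD = _\<close> by (simp add: mult.assoc)
qed

lemma rel_close:
  assumes N: "N \<ge> 1" and eps: "0 < eps" "eps < 1" and x: "x \<le> N" and z: "z \<le> N"
  shows "\<bar>kprod N K (2 * LL eps) x z / m (2 * LL eps) z - 1\<bar> \<le> eps / 4"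
proof -
  define L where "L = LL eps"
  define n where "n = 2 * L"
  have D1: "DD \<ge> 1" using DD_ge N .
  have t0: "tt eps \<ge> 0" unfolding tt_def using eps by simp
  have "(1::int) \<le> \<lceil>DD\<rceil>" using D1 by (metis ceiling_mono ceiling_one)
  then have k0: "1 \<le> nat \<lceil>DD\<rceil>" "DD \<le> real (nat \<lceil>DD\<rceil>)" by (auto simp: of_nat_ceiling le_nat_iff)
  have i: "DD * tt eps \<le> real (nat \<lceil>DD * tt eps\<rceil>)" by (simp add: of_nat_ceiling)
  have et: "exp (- tt eps) = eps / 4"
  proof -
    have e: "exp (ln (4/eps)) = 4/eps" using eps by (intro exp_ln) simp
    show ?thesis unfolding tt_def exp_minus' e by simp
  qed
  have fwd0: "(\<Sum>w\<in>{0..N}. m L w * (F x L w)^2) - 1 \<le> exp (- tt eps)"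
    apply (rule decay_generic[where \<nu> = m and F = "F x" and M = L and \<kappa> = kap and
          kz = "nat \<lceil>DD\<rceil>" and i = "nat \<lceil>DD * tt eps\<rceil>" and t = "tt eps"])
    subgoal by (rule N)
    subgoal by (rule kap_pos)
    subgoal by (rule mu0)
    subgoal by (rule mu_sum)
    subgoal using F0[OF x] by simp
    subgoal by (rule F1[OF x])
    subgoal by (rule fwd_step[OF x])
    subgoal using D1 unfolding DD_def .
    subgoal using k0(1) .
    subgoal using k0(2) unfolding DD_def .
    subgoal using i unfolding DD_def .
    subgoal unfolding L_def LL_def ..
    done
  have bwd0: "(\<Sum>w\<in>{0..N}. m (n - L) w * (G n z L w)^2) - 1 \<le> exp (- tt eps)"
    apply (rule decay_generic[where \<nu> = "\<lambda>j. m (n - j)" and F = "G n z" and M = L and \<kappa> = kap and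
          kz = "nat \<lceil>DD\<rceil>" and i = "nat \<lceil>DD * tt eps\<rceil>" and t = "tt eps"])
    subgoal by (rule N)
    subgoal by (rule kap_pos)
    subgoal by (rule mu0)
    subgoal by (rule mu_sum)
    subgoal for k w using G0[of k n z w] z unfolding n_def by simp
    subgoal for k using G1[of k n z] z unfolding n_def by simp
    subgoal for k using bwd_step[of k n z] z unfolding n_def by simp
    subgoal using D1 unfolding DD_def .
    subgoal using k0(1) .
    subgoal using k0(2) unfolding DD_def .
    subgoal using i unfolding DD_def .
    subgoal unfolding L_def LL_def ..
    done
  have fwd: "(\<Sum>w\<in>{0..N}. m L w * (F x L w)^2) - 1 \<le> eps / 4" using fwd0 et by simp
  have bwd: "(\<Sum>w\<in>{0..N}. m (n - L) w * (G n z L w)^2) - 1 \<le> eps / 4" using bwd0 et by simp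
  have nL: "n - L = L" unfolding n_def by simp
  have c: "\<bar>(\<Sum>w\<in>{0..N}. m L w * F x L w * G n z L w) - 1\<bar>
     \<le> (((\<Sum>w\<in>{0..N}. m L w * (F x L w)^2) - 1) + ((\<Sum>w\<in>{0..N}. m L w * (G n z L w)^2) - 1)) / 2"
    by (rule cross) (use mu0 mu_sum F1[OF x] G1[of L n z] z nL in \<open>auto simp: n_def\<close>)
  have "(\<Sum>w\<in>{0..N}. m L w * F x L w * G n z L w) = (\<Sum>w\<in>{0..N}. kprod N K L x w * kback N K n L w z) / m n z"
    unfolding sum_divide_distrib by (rule sum.cong) (auto simp: F_def G_def)
  also have "\<dots> = kprod N K n x z / m n z"
    using kdecomp[of L n z N K x] z nL by (simp add: kmul_def n_def)
  finally have "\<bar>kprod N K n x z / m n z - 1\<bar> \<le> eps / 4" using c fwd bwd nL by simp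
  then show ?thesis unfolding n_def L_def .
qed

lemma merged_LL:
  assumes N: "N \<ge> 1" and eps: "0 < eps" "eps < 1"
  shows "merged N K eps (2 * LL eps)"
  unfolding merged_def
proof (intro ballI)
  fix x y z assume xyz: "x \<in> {0..N}" "y \<in> {0..N}" "z \<in> {0..N}"
  define n where "n = 2 * LL eps"
  define rx where "rx = kprod N K n x z / m n z"
  define ry where "ry = kprod N K n y z / m n z"
  have hx: "\<bar>rx - 1\<bar> \<le> eps / 4" unfolding rx_def n_def using rel_close[OF N eps] xyz by auto
  have hy: "\<bar>ry - 1\<bar> \<le> eps / 4" unfolding ry_def n_def using rel_close[OF N eps] xyz by auto
  have mz: "m n z > 0" using mu_pos xyz by auto
  have ry0: "ry > 0" using hy eps by linarith
  have kx: "kprod N K n x z = rx * m n z" unfolding rx_def using mz by simp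
  have ky: "kprod N K n y z = ry * m n z" unfolding ry_def using mz by simp
  have kyne: "kprod N K n y z \<noteq> 0" using ky ry0 mz by simp
  have q: "kprod N K n x z / kprod N K n y z = rx / ry" using kx ky mz by simp
  have "\<bar>rx / ry - 1\<bar> = \<bar>rx - ry\<bar> / ry" using ry0 by (simp add: field_simps)
  also have "\<dots> < eps"
  proof -
    have "\<bar>rx - ry\<bar> \<le> eps / 2" using hx hy by linarith
    also have "\<dots> < eps * ry"
    proof -
      have "3/4 \<le> ry" using hy eps by linarith
      then have "eps * (3/4) \<le> eps * ry" using eps by (intro mult_left_mono) auto
      then show ?thesis using eps by linarith
    qed
    finally show ?thesis using ry0 by (simp add: divide_less_eq)
  qed
  finally show "ratio_close (kprod N K (2 * LL eps) x z) (kprod N K (2 * LL eps) y z) eps"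
    unfolding ratio_close_def using kyne q n_def by simp
qed

end


context model begin

lemma DD_eq: "DD = 64 * c^3 * real N * (real N + 1)"
  unfolding DD_def kap_def using c1 by (simp add: field_simps)

lemma LL_bound:
  assumes N: "N \<ge> 1" and eps: "0 < eps" "eps < 1"
  shows "real (2 * LL eps) \<le> 2000 * c^3 * real N ^ 2 * (1 + log_plus (1 / eps))"
proof -
  define l where "l = log_plus (1 / eps)"
  have l0: "l \<ge> 0" unfolding l_def log_plus_def by simp
  have D0: "DD \<ge> 0" using DD_ge[OF N] by simp
  have c3: "c^3 \<ge> 1" using c1 by (simp add: one_le_power)
  have N2: "real N ^ 2 \<ge> 1" using N by (simp add: one_le_power)
  have DDb: "DD \<le> 128 * c^3 * real N ^ 2"
  proof -
    have "real N + 1 \<le> 2 * real N" using N by simp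
    then have "64 * c^3 * real N * (real N + 1) \<le> 64 * c^3 * real N * (2 * real N)"
      using c1 by (intro mult_left_mono) auto
    then show ?thesis unfolding DD_eq by (simp add: power2_eq_square)
  qed
  have tt0: "tt eps \<ge> 0" unfolding tt_def using eps by simp
  have ttb: "tt eps \<le> 3 + l"
  proof -
    have "tt eps = ln 4 + ln (1/eps)" unfolding tt_def using eps by (simp add: ln_div)
    moreover have "ln (4::real) \<le> 3" using ln_le_minus_one[of 4] by simp
    moreover have "ln (1/eps) \<le> l" unfolding l_def log_plus_def by simp
    ultimately show ?thesis by linarith
  qed
  have a: "real (nat \<lceil>DD\<rceil>) \<le> DD + 1" using nat_ceil_le[of DD] D0 by simp
  have b: "real (nat \<lceil>DD * tt eps\<rceil>) \<le> DD * tt eps + 1" using nat_ceil_le[of "DD * tt eps"] D0 tt0 by simp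
  have "real (LL eps) \<le> (DD + 1) + (DD * tt eps + 1)"
    unfolding LL_def of_nat_add using a b by linarith
  then have "real (2 * LL eps) \<le> 2 * DD * (1 + tt eps) + 4" by (simp add: algebra_simps)
  also have "\<dots> \<le> 2 * DD * (4 + l) + 4" using ttb D0 by (intro add_right_mono mult_left_mono) auto
  also have "\<dots> \<le> 8 * DD * (1 + l) + 4 * (1 + l)" using D0 l0 by (simp add: algebra_simps mult_left_mono)
  also have "\<dots> \<le> 8 * (128 * c^3 * real N ^ 2) * (1 + l) + 4 * (c^3 * real N ^ 2) * (1 + l)"
  proof (rule add_mono)
    show "8 * DD * (1 + l) \<le> 8 * (128 * c^3 * real N ^ 2) * (1 + l)"
      using DDb l0 by (intro mult_right_mono) auto
    have "1 * 1 \<le> c^3 * real N ^ 2" using c3 N2 c1 by (intro mult_mono) auto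
    then show "4 * (1 + l) \<le> 4 * (c^3 * real N ^ 2) * (1 + l)"
      using l0 by (intro mult_right_mono) auto
  qed
  also have "\<dots> = 1028 * (c^3 * real N ^ 2 * (1 + l))" by (simp add: algebra_simps)
  also have "\<dots> \<le> 2000 * (c^3 * real N ^ 2 * (1 + l))"
  proof -
    have "0 \<le> c^3 * real N ^ 2 * (1 + l)" using c3 N2 l0 c1 by (intro mult_nonneg_nonneg) auto
    then show ?thesis by linarith
  qed
  finally show ?thesis unfolding l_def by (simp add: mult.assoc)
qed

end

lemma merged_N0: "0 < eps \<Longrightarrow> merged 0 K eps 0"
  unfolding merged_def ratio_close_def by simp

theorem theorem1p14:
  fixes c :: real
  assumes "c \<ge> 1"
  shows "\<exists>A::real. 0 < A \<and>
    (\<forall>(N::nat) (K :: nat \<Rightarrow> nat \<Rightarrow> nat \<Rightarrow> real).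
       (\<forall>i\<ge>1. K i \<in> QN N) \<longrightarrow> c_stable N c K (uniform N) \<longrightarrow>
       (\<forall>eps::real. 0 < eps \<and> eps < 1 \<longrightarrow>
          T_inf N K eps \<le> enat (nat \<lfloor>A * real N ^ 2 * (1 + log_plus (1 / eps))\<rfloor>)))"
proof (intro exI[of _ "2000 * c^3"] conjI allI impI)
  show "0 < 2000 * c^3" using assms by simp
  fix N :: nat and K :: "nat \<Rightarrow> nat \<Rightarrow> nat \<Rightarrow> real" and eps :: real
  assume KQ: "\<forall>i\<ge>1. K i \<in> QN N" and cs: "c_stable N c K (uniform N)" and eps: "0 < eps \<and> eps < 1"
  have Tle: "T_inf N K eps \<le> enat n" if "merged N K eps n" for n
    unfolding T_inf_def using that by (intro Inf_lower) auto
  show "T_inf N K eps \<le> enat (nat \<lfloor>2000 * c^3 * real N ^ 2 * (1 + log_plus (1 / eps))\<rfloor>)"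
  proof (cases "N = 0")
    case True
    then have "T_inf N K eps \<le> enat 0" using Tle merged_N0 eps by simp
    then show ?thesis using zero_enat_def by (metis order_trans enat_ord_simps(1) le0)
  next
    case False
    then have N: "N \<ge> 1" by simp
    have mk: "markov_kernel N (K i)" if "i \<ge> 1" for i
      using KQ that unfolding QN_def birth_death_def by auto
    have band: "K i x y \<ge> 1/4" if "i \<ge> 1" "x \<le> N" "y \<le> N" "\<bar>int x - int y\<bar> \<le> 1" for i x y
      using KQ that unfolding QN_def by auto
    have st: "1 / (c * (N+1)) \<le> mu N K n w \<and> mu N K n w \<le> c / (N+1)" if w: "w \<le> N" for n w
    proof -
      have "1/c \<le> mu N K n w / (1 / real (N+1)) \<and> mu N K n w / (1 / real (N+1)) \<le> c"
        using cs w unfolding c_stable_def mu_def Let_def uniform_def by auto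
      then have h: "1/c \<le> mu N K n w * real (N+1)" "mu N K n w * real (N+1) \<le> c" by auto
      have p: "real (N+1) > 0" by simp
      have "(1/c) / real (N+1) \<le> (mu N K n w * real (N+1)) / real (N+1)"
        using h(1) p by (intro divide_right_mono) auto
      then have A: "1 / (c * (N+1)) \<le> mu N K n w" using p by simp
      have B: "mu N K n w \<le> c / (N+1)" using h(2) p by (simp add: le_divide_eq)
      show ?thesis using A B by simp
    qed
    interpret model N K c
      apply unfold_locales
      subgoal by (rule assms)
      subgoal for i by (rule mk)
      subgoal for i v using band[of i v v] by simp
      subgoal for i v using band[of i v "Suc v"] by simp
      subgoal for i v using band[of i "Suc v" v] by simp
      subgoal for n w by (rule st)
      done
    have "T_inf N K eps \<le> enat (2 * LL eps)" using Tle merged_LL[OF N] eps by auto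
    also have "2 * LL eps \<le> nat \<lfloor>2000 * c^3 * real N ^ 2 * (1 + log_plus (1 / eps))\<rfloor>"
      using LL_bound[OF N] eps by (intro le_nat_floor) auto
    then have "enat (2 * LL eps) \<le> enat (nat \<lfloor>2000 * c^3 * real N ^ 2 * (1 + log_plus (1 / eps))\<rfloor>)"
      by simp
    finally show ?thesis .
  qed
qed


end
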